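(* Let $\varphi:[0,\infty]\to[0,\infty]$ be a nonconstant continuous nondecreasing convex function such that $\int_{t_*}^{\infty}(t/\varphi(t))^{\alpha}dt<\infty$ for some $\alpha>0$ and some $t_*\in(t_0,\infty)$, where $t_0=\sup\{t:\varphi(t)=0\}$ ($t_0=0$ if $\varphi>0$ everywhere), and let $\tilde\alpha\in(\alpha,\infty)$. Then $\varphi=\psi\circ\tilde\varphi$ where $\psi,\tilde\varphi:[0,\infty]\to[0,\infty]$ are strictly convex, $\tilde\varphi\le\varphi$ on $[0,\infty]$, and $\int_{t_*}^{\infty}(t/\tilde\varphi(t))^{\tilde\alpha}dt<\infty$ for some $t_*>t_0$.
   Context: A function $g:[0,\infty]\to[0,\infty]$ is called strictly convex if it is nondecreasing, convex and $\lim_{t\to\infty}g(t)/t=\infty$. Continuity is in the topology of $[0,\infty]$. *)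

theory Defs
  imports "HOL-Analysis.Analysis"
begin

definition ennconvex :: "(ennreal \<Rightarrow> ennreal) \<Rightarrow> bool" where
  "ennconvex g \<longleftrightarrow> (\<forall>x y. \<forall>l::real. 0 \<le> l \<and> l \<le> 1 \<longrightarrow>
     g (ennreal l * x + ennreal (1 - l) * y) \<le> ennreal l * g x + ennreal (1 - l) * g y)"

definition strictly_convex_enn :: "(ennreal \<Rightarrow> ennreal) \<Rightarrow> bool" where
  "strictly_convex_enn g \<longleftrightarrow> mono g \<and> ennconvex g \<and>
     ((\<lambda>t::real. g (ennreal t) / ennreal t) \<longlongrightarrow> \<infinity>) at_top"

text \<open>t0 = sup{t : g t = 0}; Sup {} = 0 in ennreal.\<close>
definition zero_level :: "(ennreal \<Rightarrow> ennreal) \<Rightarrow> ennreal" where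
  "zero_level g = Sup {t. g t = 0}"

definition ratio_pow :: "(ennreal \<Rightarrow> ennreal) \<Rightarrow> real \<Rightarrow> real \<Rightarrow> ennreal" where
  "ratio_pow g a t = (if g (ennreal t) = 0 then \<infinity> else if g (ennreal t) = \<infinity> then 0
     else ennreal ((t / enn2real (g (ennreal t))) powr a))"

end

theory Submission
  imports Defs
begin

lemma ennconvexI:
  assumes "\<And>x y l. 0 < l \<Longrightarrow> l < 1 \<Longrightarrow>
     g (ennreal l * x + ennreal (1 - l) * y) \<le> ennreal l * g x + ennreal (1 - l) * g y"
  shows "ennconvex g"
  unfolding ennconvex_def
proof (intro allI impI)
  fix x y and l :: real assume l: "0 \<le> l \<and> l \<le> 1"
  show "g (ennreal l * x + ennreal (1 - l) * y) \<le> ennreal l * g x + ennreal (1 - l) * g y"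
  proof (cases "l = 0")
    case True then show ?thesis by simp
  next
    case False
    show ?thesis
    proof (cases "l = 1")
      case True then show ?thesis by simp
    next
      case False2: False
      with False l have "0 < l" "l < 1" by auto
      then show ?thesis using assms by blast
    qed
  qed
qed

lemma ennconvex_sup:
  assumes "ennconvex f" "ennconvex g"
  shows "ennconvex (\<lambda>x. sup (f x) (g x))"
  unfolding ennconvex_def
proof (intro allI impI)
  fix x y and l :: real assume l: "0 \<le> l \<and> l \<le> 1"
  let ?z = "ennreal l * x + ennreal (1 - l) * y"
  have "f ?z \<le> ennreal l * f x + ennreal (1 - l) * f y" using assms(1) l unfolding ennconvex_def by blast
  also have "\<dots> \<le> ennreal l * sup (f x) (g x) + ennreal (1 - l) * sup (f y) (g y)"
    by (intro add_mono mult_left_mono) auto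
  finally have 1: "f ?z \<le> \<dots>" .
  have "g ?z \<le> ennreal l * g x + ennreal (1 - l) * g y" using assms(2) l unfolding ennconvex_def by blast
  also have "\<dots> \<le> ennreal l * sup (f x) (g x) + ennreal (1 - l) * sup (f y) (g y)"
    by (intro add_mono mult_left_mono) auto
  finally have 2: "g ?z \<le> \<dots>" .
  from 1 2 show "sup (f ?z) (g ?z) \<le> ennreal l * sup (f x) (g x) + ennreal (1 - l) * sup (f y) (g y)"
    by simp
qed

lemma ennconvex_SUP:
  assumes "\<And>i. i \<in> I \<Longrightarrow> ennconvex (f i)"
  shows "ennconvex (\<lambda>x. SUP i\<in>I. f i x)"
  unfolding ennconvex_def
proof (intro allI impI)
  fix x y and l :: real assume l: "0 \<le> l \<and> l \<le> 1"
  let ?z = "ennreal l * x + ennreal (1 - l) * y"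
  show "(SUP i\<in>I. f i ?z) \<le> ennreal l * (SUP i\<in>I. f i x) + ennreal (1 - l) * (SUP i\<in>I. f i y)"
  proof (rule SUP_least)
    fix i assume i: "i \<in> I"
    have "f i ?z \<le> ennreal l * f i x + ennreal (1 - l) * f i y" using assms[OF i] l unfolding ennconvex_def by blast
    also have "\<dots> \<le> ennreal l * (SUP i\<in>I. f i x) + ennreal (1 - l) * (SUP i\<in>I. f i y)"
      by (intro add_mono mult_left_mono SUP_upper i) auto
    finally show "f i ?z \<le> \<dots>" .
  qed
qed

definition Lin :: "real \<Rightarrow> real \<Rightarrow> ennreal \<Rightarrow> ennreal" where
  "Lin c k x = (if x = \<infinity> then \<infinity> else ennreal (c + k * enn2real x))"

lemma Lin_mono: assumes "k \<ge> 0" shows "mono (Lin c k)"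
proof (rule monoI)
  fix x y :: ennreal assume xy: "x \<le> y"
  show "Lin c k x \<le> Lin c k y"
  proof (cases "y = \<infinity>")
    case True then show ?thesis by (simp add: Lin_def)
  next
    case False
    then have "x \<noteq> \<infinity>" using xy top_unique by auto
    then have "enn2real x \<le> enn2real y" using xy False enn2real_mono by (simp add: top.not_eq_extremum)
    then show ?thesis using False \<open>x \<noteq> \<infinity>\<close> assms by (simp add: Lin_def ennreal_leI mult_left_mono)
  qed
qed

lemma Lin_convex: assumes "k \<ge> 0" shows "ennconvex (Lin c k)"
proof (rule ennconvexI)
  fix x y and l :: real assume l: "0 < l" "l < 1"
  show "Lin c k (ennreal l * x + ennreal (1 - l) * y) \<le> ennreal l * Lin c k x + ennreal (1 - l) * Lin c k y"
  proof (cases "x = \<infinity> \<or> y = \<infinity>")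
    case True
    then show ?thesis using l by (auto simp: Lin_def ennreal_mult_top top_add)
  next
    case False
    define x' where "x' = enn2real x"
    define y' where "y' = enn2real y"
    have xy: "x = ennreal x'" "y = ennreal y'" "x' \<ge> 0" "y' \<ge> 0"
      using False by (auto simp: x'_def y'_def less_top)
    have z: "ennreal l * x + ennreal (1 - l) * y = ennreal (l * x' + (1 - l) * y')"
      using xy l by (simp add: ennreal_mult ennreal_plus)
    have "Lin c k (ennreal l * x + ennreal (1 - l) * y) = ennreal (l * (c + k * x') + (1 - l) * (c + k * y'))"
    proof -
      have nn: "0 \<le> l * x' + (1 - l) * y'" using xy l by simp
      have "Lin c k (ennreal (l * x' + (1 - l) * y')) = ennreal (c + k * (l * x' + (1 - l) * y'))"
        using nn by (simp add: Lin_def)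
      also have "c + k * (l * x' + (1 - l) * y') = l * (c + k * x') + (1 - l) * (c + k * y')"
        by (simp add: algebra_simps)
      finally show ?thesis unfolding z .
    qed
    also have "\<dots> \<le> ennreal (l * max 0 (c + k * x') + (1 - l) * max 0 (c + k * y'))"
      using l by (intro ennreal_leI add_mono mult_left_mono) auto
    also have "\<dots> = ennreal l * ennreal (c + k * x') + ennreal (1 - l) * ennreal (c + k * y')"
    proof -
      have e: "ennreal (m * max 0 r) = ennreal m * ennreal r" if "0 \<le> m" for m r :: real
        using that by (simp add: ennreal_mult ennreal_max_0)
      show ?thesis using l by (simp add: ennreal_plus[symmetric] e)
    qed
    also have "\<dots> = ennreal l * Lin c k x + ennreal (1 - l) * Lin c k y"
      using xy by (simp add: Lin_def)
    finally show ?thesis .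
  qed
qed


locale CF =
  fixes \<phi> :: "ennreal \<Rightarrow> ennreal"
  assumes mono: "mono \<phi>" and cont: "continuous_on UNIV \<phi>" and conv: "ennconvex \<phi>"
    and fin0: "\<phi> 0 < \<infinity>"
begin

definition "S = {t::real. \<phi> (ennreal t) < \<infinity>}"
definition "a t = enn2real (\<phi> (ennreal t))"
definition "slope u v = (a v - a u) / (v - u)"
definition "d t = Inf (slope t ` {u\<in>S. t < u})"

lemma phi_mono: "s \<le> t \<Longrightarrow> \<phi> (ennreal s) \<le> \<phi> (ennreal t)"
  using mono ennreal_leI by (auto simp: mono_def)

lemma enn_le0: "t \<le> 0 \<Longrightarrow> ennreal t = 0"
  by (simp add: ennreal_eq_0_iff)

lemma S_down: "t \<in> S \<Longrightarrow> s \<le> t \<Longrightarrow> s \<in> S"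
  unfolding S_def using phi_mono by (auto intro: le_less_trans)

lemma S_le0: "t \<le> 0 \<Longrightarrow> t \<in> S"
  unfolding S_def using fin0 by (simp add: enn_le0)

lemma cont': "continuous_on UNIV (\<lambda>t::real. \<phi> (ennreal t))"
  by (rule continuous_on_compose2[OF cont continuous_on_ennreal[OF continuous_on_id]]) auto

lemma open_S: "open S"
  unfolding S_def by (rule open_Collect_less[OF cont']) simp

lemma convex_S: "convex S"
  unfolding is_interval_convex_1[symmetric] is_interval_1 using S_down by blast

lemma a_enn: "t \<in> S \<Longrightarrow> \<phi> (ennreal t) = ennreal (a t)"
  unfolding S_def a_def by simp

lemma a_nonneg: "a t \<ge> 0"
  unfolding a_def by simp

lemma a_mono: "s \<le> t \<Longrightarrow> t \<in> S \<Longrightarrow> a s \<le> a t"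
  unfolding a_def S_def using phi_mono by (auto intro!: enn2real_mono)

lemma a_le0: "t \<le> 0 \<Longrightarrow> a t = a 0"
  unfolding a_def by (simp add: enn_le0)

lemma ennreal_mult_max: "0 \<le> m \<Longrightarrow> ennreal (m * max 0 r) = ennreal m * ennreal r"
  by (simp add: ennreal_mult ennreal_max_0)

lemma a_convex: "convex_on S a"
proof (rule convex_onI[OF _ convex_S])
  fix u x y :: real assume u: "0 < u" "u < 1" and x: "x \<in> S" and y: "y \<in> S"
  let ?z = "(1 - u) *\<^sub>R x + u *\<^sub>R y"
  have m1: "(1 - u) * x \<le> (1 - u) * max x y" using u by (intro mult_left_mono) auto
  have m2: "u * y \<le> u * max x y" using u by (intro mult_left_mono) auto
  have "?z \<le> max x y" using m1 m2 by (simp add: algebra_simps)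
  then have zS: "?z \<in> S" using x y S_down by (metis max_def)
  have "ennreal ?z \<le> ennreal ((1 - u) * max 0 x + u * max 0 y)"
    using u by (intro ennreal_leI add_mono mult_left_mono) auto
  also have "\<dots> = ennreal ((1 - u) * max 0 x) + ennreal (u * max 0 y)"
    using u by (intro ennreal_plus) auto
  also have "\<dots> = ennreal (1 - u) * ennreal x + ennreal (1 - (1 - u)) * ennreal y"
    using u by (simp add: ennreal_mult_max)
  finally have le1: "ennreal ?z \<le> ennreal (1 - u) * ennreal x + ennreal (1 - (1 - u)) * ennreal y" .
  have "\<phi> (ennreal ?z) \<le> \<phi> (ennreal (1 - u) * ennreal x + ennreal (1 - (1 - u)) * ennreal y)"
    by (rule monoD[OF mono le1])
  also have "\<dots> \<le> ennreal (1 - u) * \<phi> (ennreal x) + ennreal (1 - (1 - u)) * \<phi> (ennreal y)"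
    using conv[unfolded ennconvex_def, rule_format, where x="ennreal x" and y="ennreal y" and l="1 - u"] u by simp
  also have "\<dots> = ennreal (1 - u) * ennreal (a x) + ennreal u * ennreal (a y)"
    using x y by (simp add: a_enn)
  also have "\<dots> = ennreal ((1 - u) * a x) + ennreal (u * a y)"
    using u by (simp add: ennreal_mult a_nonneg)
  also have "\<dots> = ennreal ((1 - u) * a x + u * a y)"
    using u by (intro ennreal_plus[symmetric]) (auto simp: a_nonneg)
  finally have "ennreal (a ?z) \<le> ennreal ((1 - u) * a x + u * a y)"
    using zS by (simp only: a_enn)
  moreover have "0 \<le> (1 - u) * a x + u * a y" using u by (simp add: a_nonneg)
  ultimately show "a ?z \<le> (1 - u) * a x + u * a y"
    by (simp add: ennreal_le_iff)
qed

lemma a_cont: "continuous_on S a"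
  by (rule convex_on_continuous[OF open_S a_convex])

lemma swap_div: "(p - q) / (r - s) = (q - p) / ((s::real) - r)"
proof -
  have "(q - p) / (s - r) = (-(p - q)) / (-(r - s))" by simp
  also have "\<dots> = (p - q) / (r - s)" by (rule minus_divide_divide)
  finally show ?thesis by simp
qed

lemma slope3:
  assumes "x < t" "t < y" "x \<in> S" "y \<in> S"
  shows "slope x t \<le> slope x y" "slope x y \<le> slope t y"
proof -
  have e1: "slope x t = (a x - a t) / (x - t)" "slope x y = (a x - a y) / (x - y)"
    "slope t y = (a t - a y) / (t - y)"
    unfolding slope_def by (rule swap_div)+
  show "slope x t \<le> slope x y" "slope x y \<le> slope t y"
    unfolding e1 using convex_on_slope_le[OF a_convex assms(3,4) assms(1,2)] by simp_all
qed

lemma slope_nonneg: "u < v \<Longrightarrow> v \<in> S \<Longrightarrow> slope u v \<ge> 0"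
  unfolding slope_def using a_mono by simp

lemma right_ex: "t \<in> S \<Longrightarrow> \<exists>u\<in>S. t < u"
proof -
  assume "t \<in> S"
  then obtain e where "e > 0" "ball t e \<subseteq> S" using open_S open_contains_ball by blast
  then show ?thesis by (intro bexI[of _ "t + e/2"]) (auto simp: dist_real_def)
qed

lemma D1: "t \<in> S \<Longrightarrow> u \<in> S \<Longrightarrow> t < u \<Longrightarrow> d t \<le> slope t u"
  unfolding d_def
proof (rule cInf_lower)
  assume "t \<in> S" "u \<in> S" "t < u"
  then show "slope t u \<in> slope t ` {u \<in> S. t < u}" by auto
  show "bdd_below (slope t ` {u \<in> S. t < u})"
    unfolding bdd_below_def
  proof (intro exI ballI)
    fix z assume "z \<in> slope t ` {u \<in> S. t < u}"
    then obtain v where v: "v \<in> S" "t < v" "z = slope t v" by auto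
    have "t - 1 \<in> S" using S_down \<open>t \<in> S\<close> by simp
    then show "slope (t - 1) t \<le> z" using slope3[of "t - 1" t v] v by simp
  qed
qed

lemma D2: "t \<in> S \<Longrightarrow> s < t \<Longrightarrow> slope s t \<le> d t"
  unfolding d_def
proof (rule cInf_greatest)
  assume t: "t \<in> S" "s < t"
  then show "slope t ` {u \<in> S. t < u} \<noteq> {}" using right_ex by auto
  fix z assume "z \<in> slope t ` {u \<in> S. t < u}"
  then obtain v where v: "v \<in> S" "t < v" "z = slope t v" by auto
  have "s \<in> S" using S_down t by simp
  then show "slope s t \<le> z" using slope3[of s t v] v t by simp
qed

lemma d_mono: "s \<le> t \<Longrightarrow> t \<in> S \<Longrightarrow> d s \<le> d t"
proof (cases "s = t")
  case False
  assume st: "s \<le> t" "t \<in> S"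
  with False have "s < t" by simp
  have "s \<in> S" using S_down st by blast
  with \<open>s < t\<close> st show ?thesis using D1[of s t] D2[of t s] by linarith
qed simp

lemma d_nonneg: "t \<in> S \<Longrightarrow> 0 \<le> d t"
  using D2[of t "t - 1"] slope_nonneg[of "t - 1" t] by simp

end

context CF begin

lemma int_a: "q \<in> S \<Longrightarrow> a integrable_on {p..q}"
  by (rule integrable_continuous_interval, rule continuous_on_subset[OF a_cont])
     (auto intro: S_down)

lemma int_d: "q \<in> S \<Longrightarrow> d integrable_on {p..q}"
  by (rule integrable_on_mono_on) (auto intro!: mono_onI d_mono intro: S_down)

lemma int_const_le: "p \<le> q \<Longrightarrow> q \<in> S \<Longrightarrow> integral {p..q} a \<le> (q - p) * a q"
proof -
  assume pq: "p \<le> q" "q \<in> S"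
  have "integral {p..q} a \<le> integral {p..q} (\<lambda>_. a q)"
    by (rule integral_le[OF int_a[OF pq(2)]]) (auto intro: a_mono pq)
  then show ?thesis using pq by (simp add: content_real)
qed

lemma int_const_ge: "p \<le> q \<Longrightarrow> q \<in> S \<Longrightarrow> integral {p..q} a \<ge> (q - p) * a p"
proof -
  assume pq: "p \<le> q" "q \<in> S"
  have "integral {p..q} (\<lambda>_. a p) \<le> integral {p..q} a"
    by (rule integral_le[OF _ int_a[OF pq(2)]]) (auto intro: a_mono S_down pq)
  then show ?thesis using pq by (simp add: content_real)
qed

lemma shift_int: "integral {p..q} (\<lambda>s. a (c + s)) = integral {p + c..q + c} a"
  using integral_shift_Icc_real[of p q a c] by (simp add: o_def)

lemma isCont_a: "t \<in> S \<Longrightarrow> isCont a t"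
  using a_cont open_S continuous_on_eq_continuous_at by blast

lemma FTC_U:
  assumes tt: "t \<le> t'" "t' \<in> S"
  shows "integral {t..t'} d \<le> a t' - a t"
proof -
  obtain e where e: "e > 0" "ball t' e \<subseteq> S" using open_S tt open_contains_ball by blast
  have key: "integral {t..t'} d \<le> a (t' + \<delta>) - a t" if dl: "0 < \<delta>" "\<delta> < e" for \<delta>
  proof -
    have tdS: "t' + \<delta> \<in> S" using e dl by (auto simp: dist_real_def subset_iff)
    have i1: "(\<lambda>s. a (\<delta> + s)) integrable_on {t..t'}"
      using integrable_on_shift_Icc_real[of a \<delta> t t'] int_a[OF tdS] by (simp add: o_def add.commute)
    have i0: "a integrable_on {t..t'}" using int_a tt by simp
    have "integral {t..t'} d \<le> integral {t..t'} (\<lambda>s. (a (\<delta> + s) - a s) / \<delta>)"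
    proof (rule integral_le[OF int_d[OF tt(2)]])
      show "(\<lambda>s. (a (\<delta> + s) - a s) / \<delta>) integrable_on {t..t'}"
        by (intro integrable_on_divide integrable_diff i1 i0)
      fix s assume s: "s \<in> {t..t'}"
      have sS: "s \<in> S" "s + \<delta> \<in> S" using s tt tdS by (auto intro: S_down)
      have "d s \<le> slope s (s + \<delta>)" by (rule D1) (use sS dl in auto)
      then show "d s \<le> (a (\<delta> + s) - a s) / \<delta>" by (simp add: slope_def add.commute)
    qed
    also have "\<dots> = (integral {t..t'} (\<lambda>s. a (\<delta> + s)) - integral {t..t'} a) / \<delta>"
      using integral_diff[OF i1 i0] by simp
    also have "integral {t..t'} (\<lambda>s. a (\<delta> + s)) = integral {t + \<delta>..t' + \<delta>} a"
      by (rule shift_int)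
    also have "integral {t + \<delta>..t' + \<delta>} a - integral {t..t'} a
        = integral {t'..t' + \<delta>} a - integral {t..t + \<delta>} a"
    proof -
      have "integral {t..t + \<delta>} a + integral {t + \<delta>..t' + \<delta>} a = integral {t..t' + \<delta>} a"
        using dl tt by (intro Henstock_Kurzweil_Integration.integral_combine int_a tdS) auto
      moreover have "integral {t..t'} a + integral {t'..t' + \<delta>} a = integral {t..t' + \<delta>} a"
        using dl tt by (intro Henstock_Kurzweil_Integration.integral_combine int_a tdS) auto
      ultimately show ?thesis by linarith
    qed
    also have "(integral {t'..t' + \<delta>} a - integral {t..t + \<delta>} a) / \<delta> \<le> (\<delta> * a (t' + \<delta>) - \<delta> * a t) / \<delta>"
    proof (rule divide_right_mono)
      have "integral {t'..t' + \<delta>} a \<le> \<delta> * a (t' + \<delta>)" using int_const_le[of t' "t' + \<delta>"] dl tdS by simp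
      moreover have "integral {t..t + \<delta>} a \<ge> \<delta> * a t"
        using int_const_ge[of t "t + \<delta>"] dl tt tdS S_down[of "t' + \<delta>" "t + \<delta>"] by simp
      ultimately show "integral {t'..t' + \<delta>} a - integral {t..t + \<delta>} a \<le> \<delta> * a (t' + \<delta>) - \<delta> * a t"
        by linarith
    qed (use dl in simp)
    also have "(\<delta> * a (t' + \<delta>) - \<delta> * a t) / \<delta> = a (t' + \<delta>) - a t"
      using dl by (simp add: field_simps)
    finally show ?thesis .
  qed
  have lim: "((\<lambda>\<delta>. a (t' + \<delta>) - a t) \<longlongrightarrow> a t' - a t) (at_right 0)"
  proof (intro tendsto_diff tendsto_const)
    have "((\<lambda>\<delta>. t' + \<delta>) \<longlongrightarrow> t' + 0) (at_right 0)"
      by (intro tendsto_add tendsto_const tendsto_ident_at)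
    then show "((\<lambda>\<delta>. a (t' + \<delta>)) \<longlongrightarrow> a t') (at_right 0)"
      using isCont_tendsto_compose[OF isCont_a[OF tt(2)]] by simp
  qed
  have ev: "eventually (\<lambda>\<delta>. integral {t..t'} d \<le> a (t' + \<delta>) - a t) (at_right 0)"
    unfolding eventually_at_right[OF e(1)] using key e(1) by blast
  show ?thesis
    by (rule tendsto_le[OF _ lim tendsto_const ev]) simp
qed

lemma FTC_L:
  assumes tt: "t \<le> t'" "t' \<in> S"
  shows "integral {t..t'} d \<ge> a t' - a t"
proof -
  have tS: "t \<in> S" using tt S_down by blast
  have key: "integral {t..t'} d \<ge> a (t' - \<delta>) - a t" if dl: "0 < \<delta>" for \<delta>
  proof -
    have i1: "(\<lambda>s. a (- \<delta> + s)) integrable_on {t..t'}"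
      using integrable_on_shift_Icc_real[of a "- \<delta>" t t'] int_a[of "t' - \<delta>"] tt dl S_down[of t' "t' - \<delta>"]
      by (simp add: o_def)
    have i0: "a integrable_on {t..t'}" using int_a tt by simp
    have "integral {t..t'} (\<lambda>s. (a s - a (- \<delta> + s)) / \<delta>) \<le> integral {t..t'} d"
    proof (rule integral_le[OF _ int_d[OF tt(2)]])
      show "(\<lambda>s. (a s - a (- \<delta> + s)) / \<delta>) integrable_on {t..t'}"
        by (intro integrable_on_divide integrable_diff i1 i0)
      fix s assume s: "s \<in> {t..t'}"
      have sS: "s \<in> S" using s tt by (auto intro: S_down)
      have "slope (s - \<delta>) s \<le> d s" by (rule D2) (use sS dl in auto)
      then show "(a s - a (- \<delta> + s)) / \<delta> \<le> d s" by (simp add: slope_def)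
    qed
    moreover have "integral {t..t'} (\<lambda>s. (a s - a (- \<delta> + s)) / \<delta>)
       = (integral {t..t'} a - integral {t..t'} (\<lambda>s. a (- \<delta> + s))) / \<delta>"
      using integral_diff[OF i0 i1] by simp
    moreover have "integral {t..t'} (\<lambda>s. a (- \<delta> + s)) = integral {t - \<delta>..t' - \<delta>} a"
      using shift_int[of t t' "- \<delta>"] by simp
    moreover have X: "integral {t..t'} a - integral {t - \<delta>..t' - \<delta>} a
        = integral {t' - \<delta>..t'} a - integral {t - \<delta>..t} a"
    proof -
      have "integral {t - \<delta>..t' - \<delta>} a + integral {t' - \<delta>..t'} a = integral {t - \<delta>..t'} a"
        using dl tt by (intro Henstock_Kurzweil_Integration.integral_combine int_a) auto
      moreover have "integral {t - \<delta>..t} a + integral {t..t'} a = integral {t - \<delta>..t'} a"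
        using dl tt by (intro Henstock_Kurzweil_Integration.integral_combine int_a) auto
      ultimately show ?thesis by linarith
    qed
    moreover have "(\<delta> * a (t' - \<delta>) - \<delta> * a t) / \<delta> \<le> (integral {t' - \<delta>..t'} a - integral {t - \<delta>..t} a) / \<delta>"
    proof (rule divide_right_mono)
      have "integral {t' - \<delta>..t'} a \<ge> \<delta> * a (t' - \<delta>)" using int_const_ge[of "t' - \<delta>" t'] dl tt by simp
      moreover have "integral {t - \<delta>..t} a \<le> \<delta> * a t"
        using int_const_le[of "t - \<delta>" t] dl tS by simp
      ultimately show "\<delta> * a (t' - \<delta>) - \<delta> * a t \<le> integral {t' - \<delta>..t'} a - integral {t - \<delta>..t} a"
        by linarith
    qed (use dl in simp)
    moreover have "(\<delta> * a (t' - \<delta>) - \<delta> * a t) / \<delta> = a (t' - \<delta>) - a t"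
      using dl by (simp add: field_simps)
    ultimately show ?thesis by (metis order_trans)
  qed
  have lim: "((\<lambda>\<delta>. a (t' - \<delta>) - a t) \<longlongrightarrow> a t' - a t) (at_right 0)"
  proof (intro tendsto_diff tendsto_const)
    have "((\<lambda>\<delta>. t' - \<delta>) \<longlongrightarrow> t' - 0) (at_right 0)"
      by (intro tendsto_diff tendsto_const tendsto_ident_at)
    then show "((\<lambda>\<delta>. a (t' - \<delta>)) \<longlongrightarrow> a t') (at_right 0)"
      using isCont_tendsto_compose[OF isCont_a[OF tt(2)]] by simp
  qed
  have ev: "eventually (\<lambda>\<delta>. a (t' - \<delta>) - a t \<le> integral {t..t'} d) (at_right 0)"
    unfolding eventually_at_right[OF zero_less_one] using key zero_less_one by blast
  show ?thesis
    by (rule tendsto_le[OF _ tendsto_const lim ev]) simp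
qed

end

definition gg :: "real \<Rightarrow> real \<Rightarrow> real" where
  "gg \<theta> x = (if x \<le> 1 then x else x powr \<theta>)"
definition hh :: "real \<Rightarrow> real \<Rightarrow> real" where
  "hh \<theta> x = (if x \<le> 1 then 1 else x powr (1 - \<theta>))"

lemma gh: "gg \<theta> x * hh \<theta> x = x" if "0 \<le> x"
proof (cases "x \<le> 1")
  case False
  have "x powr \<theta> * x powr (1 - \<theta>) = x powr (\<theta> + (1 - \<theta>))" by (simp only: powr_add)
  also have "\<dots> = x" using that by simp
  finally show ?thesis using False by (simp add: gg_def hh_def)
qed (simp add: gg_def hh_def)

lemma gg_mono: "0 < \<theta> \<Longrightarrow> 0 \<le> x \<Longrightarrow> x \<le> y \<Longrightarrow> gg \<theta> x \<le> gg \<theta> y"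
  unfolding gg_def
  using ge_one_powr_ge_zero[of y \<theta>] powr_mono2[of \<theta> x y] by auto

lemma hh_mono: "\<theta> < 1 \<Longrightarrow> 0 \<le> x \<Longrightarrow> x \<le> y \<Longrightarrow> hh \<theta> x \<le> hh \<theta> y"
  unfolding hh_def
  using ge_one_powr_ge_zero[of y "1 - \<theta>"] powr_mono2[of "1 - \<theta>" x y] by auto

lemma hh_ge1: "\<theta> < 1 \<Longrightarrow> 1 \<le> hh \<theta> x"
  unfolding hh_def using ge_one_powr_ge_zero[of x "1 - \<theta>"] by auto

lemma gg_le: "\<theta> < 1 \<Longrightarrow> 0 \<le> x \<Longrightarrow> gg \<theta> x \<le> x"
  unfolding gg_def using powr_mono[of \<theta> 1 x] by auto

lemma gg_nonneg: "0 \<le> x \<Longrightarrow> 0 \<le> gg \<theta> x"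
  unfolding gg_def by auto

locale CF2 = CF + fixes \<theta> :: real assumes th: "0 < \<theta>" "\<theta> < 1"
begin

definition "G t = gg \<theta> (d t)"
definition "b t = integral {0..t} G"

lemma G_nonneg: "t \<in> S \<Longrightarrow> 0 \<le> G t"
  unfolding G_def by (intro gg_nonneg d_nonneg)

lemma G_mono: "s \<le> t \<Longrightarrow> t \<in> S \<Longrightarrow> G s \<le> G t"
  unfolding G_def using th by (intro gg_mono d_mono d_nonneg) (auto intro: S_down)

lemma G_le_d: "t \<in> S \<Longrightarrow> G t \<le> d t"
  unfolding G_def using th by (intro gg_le d_nonneg) auto

lemma Gh: "t \<in> S \<Longrightarrow> G t * hh \<theta> (d t) = d t"
  unfolding G_def by (intro gh d_nonneg)

lemma int_G: "q \<in> S \<Longrightarrow> G integrable_on {p..q}"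
  by (rule integrable_on_mono_on) (auto intro!: mono_onI G_mono intro: S_down)

lemma b_diff: "0 \<le> t \<Longrightarrow> t \<le> t' \<Longrightarrow> t' \<in> S \<Longrightarrow> b t' - b t = integral {t..t'} G"
  unfolding b_def using Henstock_Kurzweil_Integration.integral_combine[of 0 t t' G] int_G by simp

lemma b_nonneg: "t \<in> S \<Longrightarrow> 0 \<le> b t"
  unfolding b_def by (rule integral_nonneg[OF int_G]) (auto intro: G_nonneg S_down)

lemma int_G_ge: "t \<le> t' \<Longrightarrow> t' \<in> S \<Longrightarrow> integral {t..t'} G \<ge> (t' - t) * G t"
proof -
  assume tt: "t \<le> t'" "t' \<in> S"
  have "integral {t..t'} (\<lambda>_. G t) \<le> integral {t..t'} G"
    by (rule integral_le[OF _ int_G[OF tt(2)]]) (auto intro: G_mono S_down tt)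
  then show ?thesis using tt by (simp add: content_real)
qed

lemma int_G_le: "t \<le> t' \<Longrightarrow> t' \<in> S \<Longrightarrow> integral {t..t'} G \<le> (t' - t) * G t'"
proof -
  assume tt: "t \<le> t'" "t' \<in> S"
  have "integral {t..t'} G \<le> integral {t..t'} (\<lambda>_. G t')"
    by (rule integral_le[OF int_G[OF tt(2)]]) (auto intro: G_mono S_down tt)
  then show ?thesis using tt by (simp add: content_real)
qed

lemma b_support:
  assumes "t \<in> S" "t' \<in> S" "0 \<le> t" "0 \<le> t'"
  shows "b t + G t * (t' - t) \<le> b t'"
proof (cases "t \<le> t'")
  case True
  then show ?thesis using b_diff[of t t'] int_G_ge[of t t'] assms by (simp add: mult.commute)
next
  case False
  then show ?thesis using b_diff[of t' t] int_G_le[of t' t] assms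
    by (simp add: algebra_simps)
qed

lemma b_le_a: "t \<in> S \<Longrightarrow> 0 \<le> t \<Longrightarrow> b t \<le> a t - a 0"
proof -
  assume t: "t \<in> S" "0 \<le> t"
  have "b t \<le> integral {0..t} d"
    unfolding b_def by (rule integral_le[OF int_G[OF t(1)] int_d[OF t(1)]]) (auto intro: G_le_d S_down t)
  also have "\<dots> \<le> a t - a 0" using FTC_U t by simp
  finally show ?thesis .
qed

lemma hhG_le:
  assumes "s \<le> t" "t \<in> S" "r \<in> S"
  shows "hh \<theta> (d s) * G r \<le> hh \<theta> (d t) * G r"
proof -
  have sS: "s \<in> S" using assms S_down by blast
  have "hh \<theta> (d s) \<le> hh \<theta> (d t)"
    by (rule hh_mono[OF th(2) d_nonneg[OF sS] d_mono[OF assms(1,2)]])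
  then show ?thesis by (rule mult_right_mono) (rule G_nonneg[OF assms(3)])
qed

lemma psi_support:
  assumes "t \<in> S" "t' \<in> S" "0 \<le> t" "0 \<le> t'"
  shows "a t + hh \<theta> (d t) * (b t' - b t) \<le> a t'"
proof (cases "t \<le> t'")
  case True
  have "hh \<theta> (d t) * integral {t..t'} G = integral {t..t'} (\<lambda>s. hh \<theta> (d t) * G s)"
    by (rule integral_mult[OF int_G[OF assms(2)]])
  also have "\<dots> \<le> integral {t..t'} d"
  proof (rule integral_le)
    show "(\<lambda>s. hh \<theta> (d t) * G s) integrable_on {t..t'}"
      using integrable_on_cmult_left[OF int_G[OF assms(2)]] by simp
    show "d integrable_on {t..t'}" using int_d assms by simp
    fix s assume s: "s \<in> {t..t'}"
    then have sS: "s \<in> S" using assms S_down by auto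
    have "hh \<theta> (d t) * G s \<le> hh \<theta> (d s) * G s"
      using hhG_le[of t s s] s sS by simp
    also have "\<dots> = d s" using Gh[OF sS] by (simp add: mult.commute)
    finally show "hh \<theta> (d t) * G s \<le> d s" .
  qed
  also have "\<dots> \<le> a t' - a t" using FTC_U True assms by simp
  finally have "hh \<theta> (d t) * integral {t..t'} G \<le> a t' - a t" .
  moreover have "b t' - b t = integral {t..t'} G" using b_diff[of t t'] True assms by simp
  ultimately show ?thesis by simp
next
  case False
  have "integral {t'..t} d \<le> integral {t'..t} (\<lambda>s. hh \<theta> (d t) * G s)"
  proof (rule integral_le)
    show "(\<lambda>s. hh \<theta> (d t) * G s) integrable_on {t'..t}"
      using integrable_on_cmult_left[OF int_G[OF assms(1)]] by simp
    show "d integrable_on {t'..t}" using int_d assms by simp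
    fix s assume s: "s \<in> {t'..t}"
    then have sS: "s \<in> S" using assms S_down by auto
    have "d s = hh \<theta> (d s) * G s" using Gh[OF sS] by (simp add: mult.commute)
    also have "\<dots> \<le> hh \<theta> (d t) * G s"
      using hhG_le[of s t s] s assms sS by simp
    finally show "d s \<le> hh \<theta> (d t) * G s" .
  qed
  also have "\<dots> = hh \<theta> (d t) * integral {t'..t} G"
    by (rule integral_mult[OF int_G[OF assms(1)], symmetric])
  finally have 1: "integral {t'..t} d \<le> hh \<theta> (d t) * integral {t'..t} G" .
  have 2: "a t - a t' \<le> integral {t'..t} d" using FTC_L[of t' t] False assms by simp
  have 3: "b t - b t' = integral {t'..t} G" using b_diff[of t' t] False assms by simp
  from 1 2 3 have "a t - a t' \<le> hh \<theta> (d t) * (b t - b t')" by simp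
  then show ?thesis by (simp add: algebra_simps)
qed

lemma b_lower: "t \<in> S \<Longrightarrow> 0 \<le> t \<Longrightarrow> (t / 2) * G (t / 2) \<le> b t"
proof -
  assume t: "t \<in> S" "0 \<le> t"
  have "b t - b (t/2) = integral {t/2..t} G" using b_diff[of "t/2" t] t by simp
  moreover have "integral {t/2..t} G \<ge> (t - t/2) * G (t/2)" using int_G_ge[of "t/2" t] t by simp
  moreover have "b (t/2) \<ge> 0" using b_nonneg S_down t by simp
  ultimately show ?thesis by simp
qed

end

context CF begin

lemma a_support: "t \<in> S \<Longrightarrow> s \<in> S \<Longrightarrow> t < s \<Longrightarrow> a t + d t * (s - t) \<le> a s"
proof -
  assume ts: "t \<in> S" "s \<in> S" "t < s"
  have "d t * (s - t) \<le> slope t s * (s - t)"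
    using D1[OF ts] ts by (intro mult_right_mono) auto
  also have "\<dots> = a s - a t" using ts unfolding slope_def by simp
  finally show ?thesis by simp
qed

lemma slope0: "0 < u \<Longrightarrow> u \<in> S \<Longrightarrow> a u - a 0 \<le> d u * u"
proof -
  assume u: "0 < u" "u \<in> S"
  have "a u - a 0 = slope 0 u * u" using u unfolding slope_def by simp
  also have "\<dots> \<le> d u * u" using D2[of u 0] u by (intro mult_right_mono) auto
  finally show ?thesis .
qed

lemma bounded_d_imp_univ:
  assumes bd: "\<forall>t\<in>S. 0 \<le> t \<longrightarrow> d t \<le> M"
  shows "S = UNIV"
proof (rule ccontr)
  assume "S \<noteq> UNIV"
  then obtain u where u: "u \<notin> S" by auto
  define M' where "M' = max M 1"
  have M': "M \<le> M'" "1 \<le> M'" unfolding M'_def by auto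
  let ?C = "{v. \<phi> (ennreal v) \<le> ennreal (a 0 + M' * max v 0)}"
  have 0: "0 \<in> S" by (rule S_le0) simp
  have SC: "S \<subseteq> ?C"
  proof
    fix v assume v: "v \<in> S"
    show "v \<in> ?C"
    proof (cases "v \<le> 0")
      case True
      then have "\<phi> (ennreal v) = ennreal (a 0)" using a_enn[OF 0] by (simp add: enn_le0)
      then show ?thesis using True by simp
    next
      case False
      have "a v - a 0 \<le> d v * v" using slope0[OF _ v] False by simp
      also have "\<dots> \<le> M' * v" using bd v False M' by (intro mult_right_mono) auto
      finally have "a v \<le> a 0 + M' * max v 0" using False by simp
      then show ?thesis using a_enn[OF v] by (simp add: ennreal_leI)
    qed
  qed
  have cC: "closed ?C"
    by (rule closed_Collect_le[OF cont']) (intro continuous_on_ennreal continuous_intros)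
  have bdd: "bdd_above S"
    unfolding bdd_above_def using u S_down by (metis linorder_le_cases)
  have "Sup S \<in> closure S" using closure_contains_Sup[OF _ bdd] 0 by auto
  also have "closure S \<subseteq> ?C" by (rule closure_minimal[OF SC cC])
  finally have "\<phi> (ennreal (Sup S)) < \<infinity>" by (auto intro: le_less_trans)
  then have "Sup S \<in> S" unfolding S_def by simp
  then obtain v where "v \<in> S" "Sup S < v" using right_ex by blast
  moreover have "v \<le> Sup S" using cSup_upper[OF \<open>v \<in> S\<close> bdd] .
  ultimately show False by simp
qed

lemma K1:
  assumes alpha: "\<alpha> > 0"
    and integ: "(\<integral>\<^sup>+ t\<in>{ts..}. ratio_pow \<phi> \<alpha> t \<partial>lborel) < \<infinity>"
  shows "\<exists>t\<in>S. 0 \<le> t \<and> M \<le> d t"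
proof (rule ccontr)
  assume "\<not> ?thesis"
  then have bd: "\<forall>t\<in>S. 0 \<le> t \<longrightarrow> d t \<le> M" by auto
  have SU: "S = UNIV" by (rule bounded_d_imp_univ[OF bd])
  define M' where "M' = max M 1"
  have M': "M \<le> M'" "1 \<le> M'" unfolding M'_def by auto
  define t2 where "t2 = max ts (max (a 0) 1)"
  define c where "c = (1 / (2 * M')) powr \<alpha>"
  have cpos: "c > 0" unfolding c_def using M' by simp
  have lb: "ennreal c \<le> ratio_pow \<phi> \<alpha> t" if t: "t2 \<le> t" for t
  proof -
    have tpos: "t > 0" using t unfolding t2_def by simp
    have tS: "t \<in> S" using SU by simp
    have "a t - a 0 \<le> d t * t" using slope0[OF tpos tS] .
    also have "\<dots> \<le> M' * t" using bd tS tpos M' by (intro mult_right_mono) auto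
    finally have "a t \<le> a 0 + M' * t" by simp
    moreover have "a 0 \<le> M' * t" using t M' unfolding t2_def
      by (smt (verit, best) mult_right_mono mult_cancel_right1)
    ultimately have at: "a t \<le> 2 * M' * t" by simp
    show ?thesis
    proof (cases "a t = 0")
      case True
      then show ?thesis using a_enn[OF tS] by (simp add: ratio_pow_def)
    next
      case False
      then have apos: "a t > 0" using a_nonneg[of t] by simp
      have "1 / (2 * M') = t / (2 * M' * t)" using tpos by simp
      also have "\<dots> \<le> t / a t" using apos tpos at by (intro divide_left_mono) auto
      finally have "c \<le> (t / a t) powr \<alpha>" unfolding c_def using alpha M' by (intro powr_mono2) auto
      then show ?thesis using a_enn[OF tS] apos by (simp add: ratio_pow_def ennreal_leI)
    qed
  qed
  let ?I = "\<integral>\<^sup>+ t\<in>{ts..}. ratio_pow \<phi> \<alpha> t \<partial>lborel"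
  have n: "ennreal c * ennreal (real n) \<le> ?I" for n :: nat
  proof -
    have "ennreal c * ennreal (real n) = (\<integral>\<^sup>+ t. ennreal c * indicator {t2..t2 + real n} t \<partial>lborel)"
      by (subst nn_integral_cmult_indicator) auto
    also have "\<dots> \<le> ?I"
    proof (rule nn_integral_mono)
      fix t
      show "ennreal c * indicator {t2..t2 + real n} t \<le> ratio_pow \<phi> \<alpha> t * indicator {ts..} t"
      proof (cases "t \<in> {t2..t2 + real n}")
        case True
        then have "t \<in> {ts..}" unfolding t2_def by auto
        then show ?thesis using True lb[of t] by auto
      qed simp
    qed
    finally show ?thesis .
  qed
  obtain x where x: "?I = ennreal x" "0 \<le> x" using integ by (cases ?I) auto
  define n where "n = nat (ceiling (x / c)) + 1"
  have "x / c < real n" unfolding n_def by linarith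
  then have "x < c * real n" using cpos by (simp add: field_simps)
  moreover have "c * real n \<le> x" using n[of n] x cpos by (simp add: ennreal_mult[symmetric] ennreal_le_iff)
  ultimately show False by simp
qed

lemma phi_inf:
  assumes k: "\<exists>t\<in>S. 0 \<le> t \<and> 1 \<le> d t"
  shows "\<phi> \<infinity> = \<infinity>"
proof (rule ccontr)
  assume "\<phi> \<infinity> \<noteq> \<infinity>"
  then have fin: "\<phi> \<infinity> < \<infinity>" by (simp add: less_top)
  have all: "\<phi> (ennreal t) \<le> \<phi> \<infinity>" for t using mono by (simp add: mono_def)
  then have SU: "t \<in> S" for t unfolding S_def using fin by (auto intro: le_less_trans)
  obtain t1 where t1: "t1 \<in> S" "0 \<le> t1" "1 \<le> d t1" using k by blast
  define B where "B = enn2real (\<phi> \<infinity>)"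
  define s where "s = t1 + B + 1"
  have B: "B \<ge> 0" unfolding B_def by simp
  have "t1 < s" unfolding s_def using B by simp
  then have "a t1 + d t1 * (s - t1) \<le> a s" using a_support[OF t1(1) SU] by blast
  moreover have "s - t1 \<le> d t1 * (s - t1)" using t1 B unfolding s_def by simp
  ultimately have "B + 1 \<le> a s" using a_nonneg[of t1] unfolding s_def by simp
  moreover have "a s \<le> B" unfolding a_def B_def using all[of s] fin by (intro enn2real_mono) auto
  ultimately show False by simp
qed

end

definition Ind :: "(ennreal \<Rightarrow> ennreal) \<Rightarrow> ennreal \<Rightarrow> ennreal" where
  "Ind f x = (if f x = \<infinity> then \<infinity> else 0)"

lemma Ind_mono: "mono f \<Longrightarrow> mono (Ind f)"
  unfolding mono_def Ind_def by (auto simp: top_unique) (metis top_unique)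

lemma Ind_convex: assumes "ennconvex f" shows "ennconvex (Ind f)"
proof (rule ennconvexI)
  fix x y and l :: real assume l: "0 < l" "l < 1"
  show "Ind f (ennreal l * x + ennreal (1 - l) * y) \<le> ennreal l * Ind f x + ennreal (1 - l) * Ind f y"
  proof (cases "f x = \<infinity> \<or> f y = \<infinity>")
    case True
    then show ?thesis using l by (auto simp: Ind_def ennreal_mult_top)
  next
    case False
    have "f (ennreal l * x + ennreal (1 - l) * y) \<le> ennreal l * f x + ennreal (1 - l) * f y"
      using assms l unfolding ennconvex_def by simp
    also have "\<dots> < \<infinity>" using False by (simp add: less_top ennreal_mult_less_top)
    finally have "f (ennreal l * x + ennreal (1 - l) * y) \<noteq> \<infinity>" by simp
    then show ?thesis by (simp add: Ind_def)
  qed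
qed

lemma superlin:
  assumes "\<And>M. M > 0 \<Longrightarrow> \<exists>T. \<forall>t\<ge>T. ennreal (M * t) \<le> f (ennreal t)"
  shows "((\<lambda>t::real. f (ennreal t) / ennreal t) \<longlongrightarrow> \<infinity>) at_top"
proof (rule order_tendstoI)
  fix y :: ennreal assume "y < \<infinity>"
  then obtain r where r: "y = ennreal r" "0 \<le> r" by (cases y) auto
  obtain T where T: "\<forall>t\<ge>T. ennreal ((r + 1) * t) \<le> f (ennreal t)" using assms[of "r + 1"] r by auto
  show "eventually (\<lambda>t. y < f (ennreal t) / ennreal t) at_top"
    unfolding eventually_at_top_linorder
  proof (intro exI[of _ "max T 1"] allI impI)
    fix t assume t: "max T 1 \<le> t"
    have "y < ennreal (r + 1)" using r by (simp add: ennreal_lessI)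
    also have "ennreal (r + 1) = ennreal ((r + 1) * t) / ennreal t"
      using t r by (simp add: divide_ennreal)
    also have "\<dots> \<le> f (ennreal t) / ennreal t" using T t by (intro divide_right_mono_ennreal) auto
    finally show "y < f (ennreal t) / ennreal t" .
  qed
qed simp

lemma gg_ge1: "1 \<le> x \<Longrightarrow> gg \<theta> x = x powr \<theta>"
  unfolding gg_def by auto

lemma pow_unb: fixes e M :: real assumes "0 < e" shows "\<exists>X\<ge>1. \<forall>x\<ge>X. M \<le> x powr e"
proof (intro exI conjI allI impI)
  let ?X = "max 1 (max M 1 powr (1 / e))"
  show "1 \<le> ?X" by simp
  fix x assume x: "?X \<le> x"
  have "M \<le> max M 1" by simp
  also have "\<dots> = (max M 1 powr (1 / e)) powr e" using assms by (simp add: powr_powr)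
  also have "\<dots> \<le> x powr e" using x assms by (intro powr_mono2) auto
  finally show "M \<le> x powr e" .
qed

lemma hh_eq_powr: "1 \<le> x \<Longrightarrow> hh \<theta> x = x powr (1 - \<theta>)"
  unfolding hh_def by auto

lemma gg_unb: assumes "0 < \<theta>" shows "\<exists>X. \<forall>x\<ge>X. M \<le> gg \<theta> x"
proof -
  obtain X where X: "1 \<le> X" "\<forall>x\<ge>X. M \<le> x powr \<theta>" using pow_unb[OF assms, of M] by blast
  show ?thesis
  proof (intro exI allI impI)
    fix x assume "X \<le> x"
    then show "M \<le> gg \<theta> x" using X gg_ge1[of x \<theta>] by simp
  qed
qed

lemma hh_unb: assumes "\<theta> < 1" shows "\<exists>X. \<forall>x\<ge>X. M \<le> hh \<theta> x"
proof -
  have "0 < 1 - \<theta>" using assms by simp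
  then obtain X where X: "1 \<le> X" "\<forall>x\<ge>X. M \<le> x powr (1 - \<theta>)" using pow_unb[of "1 - \<theta>" M] by blast
  show ?thesis
  proof (intro exI allI impI)
    fix x assume "X \<le> x"
    then show "M \<le> hh \<theta> x" using X hh_eq_powr[of x \<theta>] by simp
  qed
qed

lemma mono_SUP:
  fixes f :: "'i \<Rightarrow> 'b::order \<Rightarrow> 'a::complete_lattice"
  assumes "\<And>i. i \<in> I \<Longrightarrow> mono (f i)" shows "mono (\<lambda>x. SUP i\<in>I. f i x)"
proof (rule monoI)
  fix x y :: 'b assume xy: "x \<le> y"
  show "(SUP i\<in>I. f i x) \<le> (SUP i\<in>I. f i y)"
  proof (rule SUP_least)
    fix i assume i: "i \<in> I"
    have "f i x \<le> f i y" using assms[OF i] xy by (simp add: mono_def)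
    also have "\<dots> \<le> (SUP i\<in>I. f i y)" by (rule SUP_upper[OF i])
    finally show "f i x \<le> (SUP i\<in>I. f i y)" .
  qed
qed

lemma mono_sup: "mono f \<Longrightarrow> mono g \<Longrightarrow> mono (\<lambda>x. sup (f x) (g x) :: 'a :: semilattice_sup)"
  unfolding mono_def by (blast intro: sup_mono)

lemma Lin_fin: "0 \<le> s \<Longrightarrow> Lin c k (ennreal s) = ennreal (c + k * s)"
  by (simp add: Lin_def)

context CF2 begin

definition "P = {t. t \<in> S \<and> 0 \<le> t}"
definition "phi' x = sup (SUP t\<in>P. Lin (b t - G t * t) (G t) x) (Ind \<phi> x)"
definition "psi x = (SUP t\<in>P. Lin (a t - hh \<theta> (d t) * b t) (hh \<theta> (d t)) x)"

lemma P0: "0 \<in> P" unfolding P_def using S_le0 by simp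

lemma phi'_val: assumes t0: "t0 \<in> P" shows "phi' (ennreal t0) = ennreal (b t0)"
proof -
  have t0': "t0 \<in> S" "0 \<le> t0" using t0 unfolding P_def by auto
  have "(SUP t\<in>P. Lin (b t - G t * t) (G t) (ennreal t0)) = ennreal (b t0)"
  proof (rule antisym)
    show "(SUP t\<in>P. Lin (b t - G t * t) (G t) (ennreal t0)) \<le> ennreal (b t0)"
    proof (rule SUP_least)
      fix t assume t: "t \<in> P"
      have "b t + G t * (t0 - t) \<le> b t0" using b_support[of t t0] t t0' unfolding P_def by auto
      then show "Lin (b t - G t * t) (G t) (ennreal t0) \<le> ennreal (b t0)"
        using t0' by (simp add: Lin_fin ennreal_leI algebra_simps)
    qed
    show "ennreal (b t0) \<le> (SUP t\<in>P. Lin (b t - G t * t) (G t) (ennreal t0))"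
      by (rule SUP_upper2[OF t0]) (simp add: Lin_fin t0')
  qed
  moreover have "Ind \<phi> (ennreal t0) = 0" using t0' unfolding Ind_def S_def by simp
  ultimately show ?thesis unfolding phi'_def by (simp add: sup_max)
qed

lemma phi'_inf: "\<phi> x = \<infinity> \<Longrightarrow> phi' x = \<infinity>"
  unfolding phi'_def Ind_def by simp

lemma psi_val: assumes t0: "t0 \<in> P" shows "psi (ennreal (b t0)) = ennreal (a t0)"
  unfolding psi_def
proof (rule antisym)
  have t0': "t0 \<in> S" "0 \<le> t0" using t0 unfolding P_def by auto
  have bn: "0 \<le> b t0" using b_nonneg t0' by simp
  show "(SUP t\<in>P. Lin (a t - hh \<theta> (d t) * b t) (hh \<theta> (d t)) (ennreal (b t0))) \<le> ennreal (a t0)"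
  proof (rule SUP_least)
    fix t assume t: "t \<in> P"
    have "a t + hh \<theta> (d t) * (b t0 - b t) \<le> a t0" using psi_support[of t t0] t t0' unfolding P_def by auto
    then show "Lin (a t - hh \<theta> (d t) * b t) (hh \<theta> (d t)) (ennreal (b t0)) \<le> ennreal (a t0)"
      using bn by (simp add: Lin_fin ennreal_leI algebra_simps)
  qed
  show "ennreal (a t0) \<le> (SUP t\<in>P. Lin (a t - hh \<theta> (d t) * b t) (hh \<theta> (d t)) (ennreal (b t0)))"
    by (rule SUP_upper2[OF t0]) (simp add: Lin_fin bn)
qed

lemma psi_inf: "psi \<infinity> = \<infinity>"
proof -
  have "\<And>c k. Lin c k \<infinity> = \<infinity>" by (simp add: Lin_def)
  then have "psi \<infinity> = (SUP t\<in>P. (\<infinity>::ennreal))" unfolding psi_def by simp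
  also have "\<dots> = \<infinity>" using P0 by (intro SUP_const) auto
  finally show ?thesis .
qed

lemma fin_dom: "\<phi> \<infinity> = \<infinity> \<Longrightarrow> \<phi> x \<noteq> \<infinity> \<Longrightarrow> \<exists>t0\<in>P. x = ennreal t0"
proof -
  assume inf: "\<phi> \<infinity> = \<infinity>" and x: "\<phi> x \<noteq> \<infinity>"
  then have "x \<noteq> \<infinity>" by auto
  then have xe: "x = ennreal (enn2real x)" by (simp add: less_top)
  have "\<phi> (ennreal (enn2real x)) < \<infinity>" using x xe by (simp add: less_top[symmetric])
  then have "enn2real x \<in> P" unfolding P_def S_def by simp
  then show ?thesis using xe by blast
qed

lemma mono_phi': "mono phi'"
proof -
  have "mono (\<lambda>x. SUP t\<in>P. Lin (b t - G t * t) (G t) x)"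
    by (rule mono_SUP) (rule Lin_mono, auto simp: P_def intro: G_nonneg)
  then show ?thesis unfolding phi'_def by (rule mono_sup[OF _ Ind_mono[OF mono]])
qed

end

context CF2 begin

lemma superlin_from:
  assumes t1: "t1 \<in> P" and k: "2 * M \<le> k" and M: "M > 0" and c: "\<forall>t\<ge>0. ennreal (c + k * t) \<le> f (ennreal t)"
    and cb: "\<forall>t\<ge>T. k * t / 2 \<le> c + k * t" and T: "0 \<le> T"
  shows "\<exists>T. \<forall>t\<ge>T. ennreal (M * t) \<le> f (ennreal t)"
proof (intro exI allI impI)
  fix t assume t: "T \<le> t"
  have "M * t = (2 * M) * t / 2" by simp
  also have "\<dots> \<le> k * t / 2" using k t T by (intro divide_right_mono mult_right_mono) auto
  also have "\<dots> \<le> c + k * t" using cb t by blast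
  finally have "ennreal (M * t) \<le> ennreal (c + k * t)" by (rule ennreal_leI)
  also have "\<dots> \<le> f (ennreal t)" using c t T by auto
  finally show "ennreal (M * t) \<le> f (ennreal t)" .
qed

lemma main_part1:
  assumes K: "\<And>M. \<exists>t\<in>S. 0 \<le> t \<and> M \<le> d t"
  shows "strictly_convex_enn psi \<and> strictly_convex_enn phi' \<and> \<phi> = psi \<circ> phi' \<and> (\<forall>x. phi' x \<le> \<phi> x)"
proof -
  have inf: "\<phi> \<infinity> = \<infinity>" using phi_inf K by blast
  have KP: "\<exists>t\<in>P. M \<le> d t" for M using K[of M] unfolding P_def by blast
  have comp: "\<phi> = psi \<circ> phi'"
  proof
    fix x
    show "\<phi> x = (psi \<circ> phi') x"
    proof (cases "\<phi> x = \<infinity>")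
      case True
      then show ?thesis using phi'_inf psi_inf by simp
    next
      case False
      then obtain t0 where t0: "t0 \<in> P" "x = ennreal t0" using fin_dom inf by blast
      then show ?thesis using phi'_val psi_val a_enn unfolding P_def by simp
    qed
  qed
  have le: "\<forall>x. phi' x \<le> \<phi> x"
  proof
    fix x
    show "phi' x \<le> \<phi> x"
    proof (cases "\<phi> x = \<infinity>")
      case False
      then obtain t0 where t0: "t0 \<in> P" "x = ennreal t0" using fin_dom inf by blast
      then have t0': "t0 \<in> S" "0 \<le> t0" unfolding P_def by auto
      have "b t0 \<le> a t0" using b_le_a[OF t0'] a_nonneg[of 0] by simp
      then show ?thesis using t0 t0' phi'_val a_enn by (simp add: ennreal_leI)
    qed simp
  qed
  have mono_psi: "mono psi"
    unfolding psi_def by (rule mono_SUP, rule Lin_mono) (use hh_ge1[OF th(2)] in \<open>auto intro: order_trans[OF zero_le_one]\<close>)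
  have conv_psi: "ennconvex psi"
    unfolding psi_def by (rule ennconvex_SUP, rule Lin_convex) (use hh_ge1[OF th(2)] in \<open>auto intro: order_trans[OF zero_le_one]\<close>)
  have lim_psi: "((\<lambda>t::real. psi (ennreal t) / ennreal t) \<longlongrightarrow> \<infinity>) at_top"
  proof (rule superlin)
    fix M :: real assume M: "M > 0"
    obtain X where X: "\<forall>x\<ge>X. 2 * M \<le> hh \<theta> x" using hh_unb th by blast
    obtain t1 where t1: "t1 \<in> P" "X \<le> d t1" using KP by blast
    have t1': "t1 \<in> S" "0 \<le> t1" using t1 unfolding P_def by auto
    define k where "k = hh \<theta> (d t1)"
    have k: "2 * M \<le> k" using X t1 unfolding k_def by blast
    show "\<exists>T. \<forall>t\<ge>T. ennreal (M * t) \<le> psi (ennreal t)"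
    proof (rule superlin_from[OF t1(1) k M, where c = "a t1 - k * b t1" and T = "2 * b t1"])
      show "\<forall>t\<ge>0. ennreal (a t1 - k * b t1 + k * t) \<le> psi (ennreal t)"
      proof (intro allI impI)
        fix t :: real assume "0 \<le> t"
        then have "ennreal (a t1 - k * b t1 + k * t) = Lin (a t1 - hh \<theta> (d t1) * b t1) (hh \<theta> (d t1)) (ennreal t)"
          by (simp add: Lin_fin k_def)
        also have "\<dots> \<le> psi (ennreal t)" unfolding psi_def by (rule SUP_upper[OF t1(1)])
        finally show "ennreal (a t1 - k * b t1 + k * t) \<le> psi (ennreal t)" .
      qed
      show "\<forall>t\<ge>2 * b t1. k * t / 2 \<le> a t1 - k * b t1 + k * t"
      proof (intro allI impI)
        fix t assume t: "2 * b t1 \<le> t"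
        have "k * (2 * b t1) \<le> k * t" using t k M by (intro mult_left_mono) auto
        then show "k * t / 2 \<le> a t1 - k * b t1 + k * t" using a_nonneg[of t1] by simp
      qed
      show "0 \<le> 2 * b t1" using b_nonneg[OF t1'(1)] by simp
    qed
  qed
  have mono_phi'': "mono phi'" by (rule mono_phi')
  have conv_phi': "ennconvex phi'"
    unfolding phi'_def
    by (rule ennconvex_sup[OF ennconvex_SUP Ind_convex[OF conv]], rule Lin_convex)
       (auto simp: P_def intro: G_nonneg)
  have lim_phi': "((\<lambda>t::real. phi' (ennreal t) / ennreal t) \<longlongrightarrow> \<infinity>) at_top"
  proof (rule superlin)
    fix M :: real assume M: "M > 0"
    obtain X where X: "\<forall>x\<ge>X. 2 * M \<le> gg \<theta> x" using gg_unb th by blast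
    obtain t1 where t1: "t1 \<in> P" "X \<le> d t1" using KP by blast
    have t1': "t1 \<in> S" "0 \<le> t1" using t1 unfolding P_def by auto
    define k where "k = G t1"
    have k: "2 * M \<le> k" using X t1 unfolding k_def G_def by blast
    show "\<exists>T. \<forall>t\<ge>T. ennreal (M * t) \<le> phi' (ennreal t)"
    proof (rule superlin_from[OF t1(1) k M, where c = "b t1 - k * t1" and T = "2 * t1"])
      show "\<forall>t\<ge>0. ennreal (b t1 - k * t1 + k * t) \<le> phi' (ennreal t)"
      proof (intro allI impI)
        fix t :: real assume "0 \<le> t"
        then have "ennreal (b t1 - k * t1 + k * t) = Lin (b t1 - G t1 * t1) (G t1) (ennreal t)"
          by (simp add: Lin_fin k_def)
        also have "\<dots> \<le> (SUP s\<in>P. Lin (b s - G s * s) (G s) (ennreal t))" by (rule SUP_upper[OF t1(1)])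
        also have "\<dots> \<le> phi' (ennreal t)" unfolding phi'_def by (rule sup_ge1)
        finally show "ennreal (b t1 - k * t1 + k * t) \<le> phi' (ennreal t)" .
      qed
      show "\<forall>t\<ge>2 * t1. k * t / 2 \<le> b t1 - k * t1 + k * t"
      proof (intro allI impI)
        fix t assume t: "2 * t1 \<le> t"
        have "k * (2 * t1) \<le> k * t" using t k M by (intro mult_left_mono) auto
        then show "k * t / 2 \<le> b t1 - k * t1 + k * t" using b_nonneg[OF t1'(1)] by simp
      qed
      show "0 \<le> 2 * t1" using t1' by simp
    qed
  qed
  show ?thesis unfolding strictly_convex_enn_def
    using comp le mono_psi conv_psi lim_psi mono_phi'' conv_phi' lim_phi' by blast
qed

end

lemma real_ineq:
  fixes t s bt as a0 \<theta> \<alpha> \<alpha>' \<sigma> :: real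
  assumes s: "t = 2 * s" "s > 0" and sg: "\<sigma> = (as - a0) / s" "\<sigma> \<ge> 1"
    and bt: "bt \<ge> s * \<sigma> powr \<theta>" and as: "as \<ge> 2 * a0" "a0 \<ge> 0"
    and th: "\<theta> > 0" "\<theta> * \<alpha>' = \<alpha>" "\<alpha> > 0" "\<alpha>' > 0"
  shows "(t / bt) powr \<alpha>' \<le> 2 powr \<alpha>' * 2 powr \<alpha> * (s / as) powr \<alpha>"
proof -
  have sp: "\<sigma> > 0" using sg by simp
  have sth: "\<sigma> powr \<theta> > 0" using sp by simp
  have bpos: "bt > 0" using bt s sth by (smt (verit) mult_pos_pos)
  have asa0: "as - a0 = \<sigma> * s" using sg s by simp
  then have asa0p: "as - a0 > 0" using sp s by simp
  have aspos: "as > 0" using asa0p as by simp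
  define \<rho> where "\<rho> = 1 / \<sigma>"
  have rp: "\<rho> > 0" unfolding \<rho>_def using sp by simp
  have "t / bt \<le> t / (s * \<sigma> powr \<theta>)"
    using bt bpos s sth by (intro divide_left_mono) auto
  also have "\<dots> = 2 / \<sigma> powr \<theta>" using s by simp
  also have "\<dots> = 2 * \<rho> powr \<theta>" unfolding \<rho>_def using sp by (simp add: powr_divide)
  finally have h1: "t / bt \<le> 2 * \<rho> powr \<theta>" .
  have "(t / bt) powr \<alpha>' \<le> (2 * \<rho> powr \<theta>) powr \<alpha>'"
    using h1 bpos s th by (intro powr_mono2) auto
  also have "\<dots> = 2 powr \<alpha>' * (\<rho> powr \<theta>) powr \<alpha>'" using rp by (simp add: powr_mult)
  also have "\<dots> = 2 powr \<alpha>' * \<rho> powr \<alpha>" using th by (simp add: powr_powr)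
  finally have h2: "(t / bt) powr \<alpha>' \<le> 2 powr \<alpha>' * \<rho> powr \<alpha>" .
  have "\<rho> = s / (as - a0)" unfolding \<rho>_def using asa0 s sp by simp
  also have "\<dots> \<le> s / (as / 2)" using as asa0p s by (intro divide_left_mono) auto
  also have "\<dots> = 2 * (s / as)" by simp
  finally have h3: "\<rho> \<le> 2 * (s / as)" .
  have "\<rho> powr \<alpha> \<le> (2 * (s / as)) powr \<alpha>" using h3 rp th by (intro powr_mono2) auto
  also have "\<dots> = 2 powr \<alpha> * (s / as) powr \<alpha>"
    by (rule powr_mult) (use s aspos in \<open>auto simp: less_imp_le\<close>)?
  finally have h4: "\<rho> powr \<alpha> \<le> 2 powr \<alpha> * (s / as) powr \<alpha>" .
  have "2 powr \<alpha>' * \<rho> powr \<alpha> \<le> 2 powr \<alpha>' * (2 powr \<alpha> * (s / as) powr \<alpha>)"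
    by (rule mult_left_mono[OF h4]) simp
  from order_trans[OF h2 this] show ?thesis by (simp only: mult.assoc)
qed

context CF2 begin

lemma F_meas: "ratio_pow \<phi> \<alpha> \<in> borel_measurable borel"
proof -
  have [measurable]: "\<phi> \<in> borel_measurable borel" by (rule borel_measurable_continuous_onI[OF cont])
  show ?thesis unfolding ratio_pow_def by measurable
qed

end

context CF2 begin

lemma main_part2:
  assumes K: "\<And>M. \<exists>t\<in>S. 0 \<le> t \<and> M \<le> d t"
    and alpha: "\<alpha> > 0" and alpha': "\<alpha>' > \<alpha>" and thd: "\<theta> * \<alpha>' = \<alpha>"
    and ts: "ennreal ts > zero_level \<phi>"
    and integ: "(\<integral>\<^sup>+ t\<in>{ts..}. ratio_pow \<phi> \<alpha> t \<partial>lborel) < \<infinity>"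
  shows "\<exists>ts'::real. ennreal ts' > zero_level \<phi> \<and>
              (\<integral>\<^sup>+ t\<in>{ts'..}. ratio_pow phi' \<alpha>' t \<partial>lborel) < \<infinity>"
proof -
  obtain t1 where t1: "t1 \<in> S" "0 \<le> t1" "2 \<le> d t1" using K[of 2] by blast
  define s0 where "s0 = max (max (2 * t1) (a 0)) (max ts 1)"
  define ts' where "ts' = 2 * s0"
  have s0: "2 * t1 \<le> s0" "a 0 \<le> s0" "ts \<le> s0" "1 \<le> s0" unfolding s0_def by auto
  have zl: "ennreal ts' > zero_level \<phi>"
  proof -
    have "ennreal ts \<le> ennreal ts'" unfolding ts'_def using s0 by (intro ennreal_leI) auto
    then show ?thesis using ts by (rule order.strict_trans2[rotated])
  qed
  define C where "C = 2 powr \<alpha>' * 2 powr \<alpha>"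
  have pw: "ratio_pow phi' \<alpha>' t \<le> ennreal C * ratio_pow \<phi> \<alpha> (t / 2)" if t: "ts' \<le> t" for t
  proof (cases "t \<in> S")
    case False
    then have "\<phi> (ennreal t) = \<infinity>" unfolding S_def by (simp add: less_top[symmetric])
    then have "phi' (ennreal t) = \<infinity>" by (rule phi'_inf)
    then show ?thesis by (simp add: ratio_pow_def)
  next
    case True
    define s where "s = t / 2"
    have ss: "s0 \<le> s" "0 < s" "t = 2 * s" using t s0 unfolding s_def ts'_def by auto
    have sS: "s \<in> S" using True S_down ss by simp
    have tP: "t \<in> P" using True ss unfolding P_def by simp
    have "t1 < s" using ss s0 t1 by linarith
    have f1: "a t1 + d t1 * (s - t1) \<le> a s" by (rule a_support[OF t1(1) sS \<open>t1 < s\<close>])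
    have f2: "2 * (s - t1) \<le> d t1 * (s - t1)" using t1 \<open>t1 < s\<close> by (intro mult_right_mono) auto
    have "a t1 + 2 * (s - t1) \<le> a s" using f1 f2 by (rule_tac order_trans[OF _ f1]) simp
    moreover have "a 0 \<le> a t1" using t1 a_mono by simp
    ultimately have as: "s \<le> a s - a 0" using ss s0 by (smt (verit))
    define \<sigma> where "\<sigma> = (a s - a 0) / s"
    have sg1: "1 \<le> \<sigma>" unfolding \<sigma>_def using as ss by simp
    have "slope 0 s \<le> d s" using D2[OF sS ss(2)] .
    then have dsg: "\<sigma> \<le> d s" unfolding \<sigma>_def slope_def by simp
    have "\<sigma> powr \<theta> = gg \<theta> \<sigma>" using gg_ge1[OF sg1] by simp
    also have "\<dots> \<le> G s" unfolding G_def using sg1 dsg th by (intro gg_mono) auto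
    finally have "s * \<sigma> powr \<theta> \<le> s * G s" using ss by (intro mult_left_mono) auto
    also have "\<dots> \<le> b t" using b_lower[of t] True ss unfolding s_def by simp
    finally have bt: "s * \<sigma> powr \<theta> \<le> b t" .
    have btp: "b t > 0" using bt ss sg1 by (smt (verit) mult_pos_pos powr_gt_zero)
    have asp: "a s > 0" using as ss a_nonneg[of 0] by linarith
    have ri: "(t / b t) powr \<alpha>' \<le> C * (s / a s) powr \<alpha>"
      unfolding C_def
      by (rule real_ineq[OF ss(3) ss(2) \<sigma>_def sg1 bt _ a_nonneg th(1) thd alpha])
         (use as ss s0 alpha alpha' in auto)
    have l: "ratio_pow phi' \<alpha>' t = ennreal ((t / b t) powr \<alpha>')"
      using phi'_val[OF tP] btp by (simp add: ratio_pow_def)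
    have r: "ratio_pow \<phi> \<alpha> (t / 2) = ennreal ((s / a s) powr \<alpha>)"
      using a_enn[OF sS] asp unfolding s_def[symmetric] by (simp add: ratio_pow_def)
    show ?thesis unfolding l r using ri
      by (simp add: ennreal_mult[symmetric] C_def ennreal_leI)
  qed
  have [measurable]: "ratio_pow \<phi> \<alpha> \<in> borel_measurable borel" by (rule F_meas)
  let ?H = "\<lambda>t. ratio_pow \<phi> \<alpha> (t / 2) * indicator {ts'..} t"
  have Hm: "?H \<in> borel_measurable borel" by measurable
  have "(\<integral>\<^sup>+ t\<in>{ts'..}. ratio_pow phi' \<alpha>' t \<partial>lborel) \<le> (\<integral>\<^sup>+ t. ennreal C * ?H t \<partial>lborel)"
  proof (rule nn_integral_mono)
    fix t
    show "ratio_pow phi' \<alpha>' t * indicator {ts'..} t \<le> ennreal C * ?H t"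
      using pw[of t] by (cases "ts' \<le> t") (auto simp: mult.assoc)
  qed
  also have "\<dots> = ennreal C * (\<integral>\<^sup>+ t. ?H t \<partial>lborel)"
    by (rule nn_integral_cmult) (use Hm in simp)
  also have "(\<integral>\<^sup>+ t. ?H t \<partial>lborel) = 2 * (\<integral>\<^sup>+ x. ?H (0 + 2 * x) \<partial>lborel)"
    using nn_integral_real_affine[OF Hm, of 2 0] by simp
  also have "(\<integral>\<^sup>+ x. ?H (0 + 2 * x) \<partial>lborel) \<le> (\<integral>\<^sup>+ x\<in>{ts..}. ratio_pow \<phi> \<alpha> x \<partial>lborel)"
  proof (rule nn_integral_mono)
    fix x
    show "?H (0 + 2 * x) \<le> ratio_pow \<phi> \<alpha> x * indicator {ts..} x"
      using s0 unfolding ts'_def by (cases "ts' \<le> 2 * x") (auto simp: ts'_def indicator_def)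
  qed
  finally have "(\<integral>\<^sup>+ t\<in>{ts'..}. ratio_pow phi' \<alpha>' t \<partial>lborel)
      \<le> ennreal C * (2 * (\<integral>\<^sup>+ x\<in>{ts..}. ratio_pow \<phi> \<alpha> x \<partial>lborel))"
    by (simp add: mult_left_mono)
  also have "\<dots> < \<infinity>" using integ by (simp add: ennreal_mult_less_top less_top)
  finally show ?thesis using zl by blast
qed

end

theorem lemma2p1:
  fixes \<phi> :: "ennreal \<Rightarrow> ennreal" and \<alpha> \<alpha>' ts :: real
  assumes nonconst: "\<exists>x y. \<phi> x \<noteq> \<phi> y"
    and cont: "continuous_on UNIV \<phi>"
    and mono: "mono \<phi>"
    and conv: "ennconvex \<phi>"
    and alpha: "\<alpha> > 0"
    and ts: "ennreal ts > zero_level \<phi>"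
    and integ: "(\<integral>\<^sup>+ t\<in>{ts..}. ratio_pow \<phi> \<alpha> t \<partial>lborel) < \<infinity>"
    and alpha': "\<alpha>' > \<alpha>"
  shows "\<exists>\<psi> \<phi>'. strictly_convex_enn \<psi> \<and> strictly_convex_enn \<phi>' \<and>
           \<phi> = \<psi> \<circ> \<phi>' \<and> (\<forall>x. \<phi>' x \<le> \<phi> x) \<and>
           (\<exists>ts'::real. ennreal ts' > zero_level \<phi> \<and>
              (\<integral>\<^sup>+ t\<in>{ts'..}. ratio_pow \<phi>' \<alpha>' t \<partial>lborel) < \<infinity>)"
proof -
  have fin0: "\<phi> 0 < \<infinity>"
  proof (rule ccontr)
    assume "\<not> \<phi> 0 < \<infinity>"
    then have inf0: "\<phi> 0 = \<infinity>" by (simp add: less_top[symmetric])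
    have "\<phi> x = \<infinity>" for x
    proof -
      have "\<phi> 0 \<le> \<phi> x" using mono by (simp add: mono_def)
      then show ?thesis using inf0 by (simp add: top_unique)
    qed
    then show False using nonconst by auto
  qed
  define \<theta> where "\<theta> = \<alpha> / \<alpha>'"
  have th: "0 < \<theta>" "\<theta> < 1" using alpha alpha' by (auto simp: \<theta>_def field_simps)
  interpret CF2 \<phi> \<theta>
    by unfold_locales (use mono cont conv fin0 th in auto)
  have K: "\<And>M. \<exists>t\<in>S. 0 \<le> t \<and> M \<le> d t" using K1[OF alpha integ] by blast
  have thd: "\<theta> * \<alpha>' = \<alpha>" using alpha alpha' by (simp add: \<theta>_def)
  from main_part1[OF K] main_part2[OF K alpha alpha' thd ts integ] show ?thesis by blast
qed

end
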